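(* Let $H$ be a graph such that $L(H)$ has a $K_t$-immersion. Then for every integer $m\geq 2$, the line graph $L(mH)$ has a $K_{mt}$-immersion.
   Context: Graphs are finite and may have parallel edges but no loops. The line graph $L(H)$ of a graph $H$ is the simple graph whose vertex set is $E(H)$, in which two distinct edges of $H$ are adjacent iff they share at least one endpoint (so parallel edges of $H$ are adjacent in $L(H)$). For $m\geq 2$, $mH$ denotes the graph obtained from $H$ by replacing each edge $e$ by $m$ parallel copies of $e$. A graph $G$ has a $K_t$-immersion if there is an injective map $\phi$ from the vertex set of $K_t$ to $V(G)$ and, for each pair $u\neq v$ of vertices of $K_t$, a path in $G$ joining $\phi(u)$ and $\phi(v)$, such that these $\binom{t}{2}$ paths are pairwise edge-disjoint (equivalently, $K_t$ can be obtained from a subgraph of $G$ by repeatedly splitting off pairs of adjacent edges and deleting isolated vertices). *)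

theory Defs
  imports Main
begin

text \<open>A finite multigraph without loops: vertex set V, edge set E (edges are abstract
objects, so parallel edges are allowed), and an endpoint map giving each edge a
2-element set of endpoints in V.\<close>
definition multigraph :: "'v set \<Rightarrow> 'e set \<Rightarrow> ('e \<Rightarrow> 'v set) \<Rightarrow> bool" where
  "multigraph V E ends \<longleftrightarrow> finite V \<and> finite E \<and>
     (\<forall>e\<in>E. card (ends e) = 2 \<and> ends e \<subseteq> V)"

definition line_adj :: "'e set \<Rightarrow> ('e \<Rightarrow> 'v set) \<Rightarrow> 'e \<Rightarrow> 'e \<Rightarrow> bool" where
  "line_adj E ends e f \<longleftrightarrow> e \<in> E \<and> f \<in> E \<and> e \<noteq> f \<and> ends e \<inter> ends f \<noteq> {}"

text \<open>mH: each edge e replaced by m parallel copies (e,0),...,(e,m-1).\<close>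
definition mult_edges :: "nat \<Rightarrow> 'e set \<Rightarrow> ('e \<times> nat) set" where
  "mult_edges m E = E \<times> {..<m}"

definition mult_ends :: "('e \<Rightarrow> 'v set) \<Rightarrow> ('e \<times> nat) \<Rightarrow> 'v set" where
  "mult_ends ends p = ends (fst p)"

fun path_edges :: "'a list \<Rightarrow> 'a set set" where
  "path_edges (x # y # xs) = insert {x, y} (path_edges (y # xs))"
| "path_edges _ = {}"

definition is_path :: "'a set \<Rightarrow> ('a \<Rightarrow> 'a \<Rightarrow> bool) \<Rightarrow> 'a list \<Rightarrow> 'a \<Rightarrow> 'a \<Rightarrow> bool" where
  "is_path V Adj xs a b \<longleftrightarrow> xs \<noteq> [] \<and> hd xs = a \<and> last xs = b \<and> distinct xs \<and>
     set xs \<subseteq> V \<and> (\<forall>i. Suc i < length xs \<longrightarrow> Adj (xs ! i) (xs ! Suc i))"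

definition has_K_immersion :: "'a set \<Rightarrow> ('a \<Rightarrow> 'a \<Rightarrow> bool) \<Rightarrow> nat \<Rightarrow> bool" where
  "has_K_immersion V Adj t \<longleftrightarrow>
     (\<exists>\<phi> P. inj_on \<phi> {..<t} \<and> \<phi> ` {..<t} \<subseteq> V \<and>
        (\<forall>u v. u < v \<and> v < t \<longrightarrow> is_path V Adj (P u v) (\<phi> u) (\<phi> v)) \<and>
        (\<forall>u v u' v'. u < v \<and> v < t \<and> u' < v' \<and> v' < t \<and> (u, v) \<noteq> (u', v') \<longrightarrow>
            path_edges (P u v) \<inter> path_edges (P u' v') = {}))"

end

theory Submission imports Defs begin

lemma path_edges_nth: "path_edges xs = {{xs!l, xs!Suc l} | l. Suc l < length xs}"
proof (induction xs rule: path_edges.induct)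
  case (1 x y xs)
  let ?L = "x#y#xs"
  have A: "{{?L!l, ?L!Suc l} | l. Suc l < length ?L} = insert {x,y} {{(y#xs)!l, (y#xs)!Suc l} | l. Suc l < length (y#xs)}"
  proof (intro equalityI subsetI)
    fix e assume "e \<in> {{?L!l, ?L!Suc l} | l. Suc l < length ?L}"
    then obtain l where l: "Suc l < length ?L" "e = {?L!l, ?L!Suc l}" by blast
    show "e \<in> insert {x,y} {{(y#xs)!l, (y#xs)!Suc l} | l. Suc l < length (y#xs)}"
    proof (cases l)
      case 0 then show ?thesis using l by simp
    next
      case (Suc l') then have "Suc l' < length (y#xs)" "e = {(y#xs)!l', (y#xs)!Suc l'}" using l by simp_all
      then show ?thesis by blast
    qed
  next
    fix e assume "e \<in> insert {x,y} {{(y#xs)!l, (y#xs)!Suc l} | l. Suc l < length (y#xs)}"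
    then consider "e = {x,y}" | l where "Suc l < length (y#xs)" "e = {(y#xs)!l, (y#xs)!Suc l}" by blast
    then show "e \<in> {{?L!l, ?L!Suc l} | l. Suc l < length ?L}"
    proof cases
      case 1 then have "Suc 0 < length ?L" "e = {?L!0, ?L!Suc 0}" by simp_all
      then show ?thesis by blast
    next
      case (2 l) then have "Suc (Suc l) < length ?L" "e = {?L!Suc l, ?L!Suc (Suc l)}" by simp_all
      then show ?thesis by blast
    qed
  qed
  show ?case using A 1 by simp
next
  case ("2_1") show ?case by simp
next
  case ("2_2" v) show ?case by simp
qed

definition col :: "nat \<Rightarrow> nat \<Rightarrow> nat \<Rightarrow> nat \<Rightarrow> nat \<Rightarrow> nat" where
"col m k i j l = (if odd k then (if even l then i else j) else if l = 0 then i else if l = 1 then (i+j) mod m else if even l then j else i)"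

lemma col_lt: "i < m \<Longrightarrow> j < m \<Longrightarrow> col m k i j l < m"
  by (simp add: col_def)

lemma col_0: "col m k i j 0 = i" by (simp add: col_def)
lemma col_last: "k > 0 \<Longrightarrow> col m k i j k = j" by (simp add: col_def)

lemma mod_cancel: "i < (m::nat) \<Longrightarrow> j < m \<Longrightarrow> j' < m \<Longrightarrow> (i+j) mod m = (i+j') mod m \<Longrightarrow> j = j'"
  proof -
  assume a: "i < m" "j < m" "j' < m" "(i+j) mod m = (i+j') mod m"
  have e: "\<And>x. x < m \<Longrightarrow> (i+x) mod m = (if i+x < m then i+x else i+x-m)"
    using a(1) by (simp add: mod_if le_mod_geq)
  show ?thesis using a e[of j] e[of j'] by (auto split: if_splits)
qed

lemma col_inj:
  assumes "i < m" "j < m" "i' < m" "j' < m" "Suc l \<le> k"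
    "col m k i j l = col m k i' j' l" "col m k i j (Suc l) = col m k i' j' (Suc l)"
  shows "i = i' \<and> j = j'"
proof (cases "odd k")
  case True then show ?thesis using assms by (auto simp: col_def split: if_splits)
next
  case False
  show ?thesis
  proof (cases "l = 0")
    case True
    then have "i = i'" using assms False by (simp add: col_def)
    moreover then have "(i+j) mod m = (i+j') mod m" using assms False True by (simp add: col_def)
    ultimately show ?thesis using mod_cancel assms by blast
  next
    case l: False
    show ?thesis
    proof (cases "l = 1")
      case True
      then have "j = j'" using assms False by (simp add: col_def)
      moreover then have "(i+j) mod m = (i'+j) mod m" using assms False True by (simp add: col_def)
      ultimately show ?thesis using mod_cancel[of j m i i'] assms by (simp add: add.commute)
    next
      case False
      then show ?thesis using assms l \<open>\<not> odd k\<close> by (auto simp: col_def split: if_splits)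
    qed
  qed
qed


definition lift :: "nat \<Rightarrow> 'e list \<Rightarrow> nat \<Rightarrow> nat \<Rightarrow> ('e \<times> nat) list" where
"lift m xs i j = map (\<lambda>l. (xs!l, col m (length xs - 1) i j l)) [0..<length xs]"

lemma lift_len[simp]: "length (lift m xs i j) = length xs" by (simp add: lift_def)
lemma lift_nth: "l < length xs \<Longrightarrow> lift m xs i j ! l = (xs!l, col m (length xs - 1) i j l)"
  by (simp add: lift_def)

lemma lift_edges: "path_edges (lift m xs i j) =
  {{(xs!l, col m (length xs - 1) i j l), (xs!Suc l, col m (length xs - 1) i j (Suc l))} | l. Suc l < length xs}"
proof -
  have eq: "\<And>l. Suc l < length xs \<Longrightarrow> {lift m xs i j ! l, lift m xs i j ! Suc l} =
     {(xs!l, col m (length xs - 1) i j l), (xs!Suc l, col m (length xs - 1) i j (Suc l))}"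
    by (simp add: lift_nth)
  show ?thesis unfolding path_edges_nth lift_len using eq by blast
qed

lemma lift_path:
  assumes p: "is_path E (line_adj E ends) xs a b" and ab: "a \<noteq> b" and ij: "i < m" "j < m"
  shows "is_path (mult_edges m E) (line_adj (mult_edges m E) (mult_ends ends)) (lift m xs i j) (a,i) (b,j)"
proof -
  let ?k = "length xs - 1"
  have ne: "xs \<noteq> []" and h: "hd xs = a" and la: "last xs = b" and d: "distinct xs"
    and s: "set xs \<subseteq> E" and adj: "\<And>l. Suc l < length xs \<Longrightarrow> line_adj E ends (xs!l) (xs!Suc l)"
    using p by (auto simp: is_path_def)
  have k: "?k > 0"
  proof (rule ccontr)
    assume "\<not> ?k > 0"
    then have "length xs = 1" using ne by (cases xs) auto
    then have "hd xs = last xs" by (cases xs) auto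
    then show False using h la ab by simp
  qed
  have "lift m xs i j \<noteq> []" using ne by (simp add: lift_def)
  moreover have "hd (lift m xs i j) = (a,i)"
  proof -
    have "lift m xs i j \<noteq> []" using ne by (simp add: lift_def)
    then have "hd (lift m xs i j) = lift m xs i j ! 0" by (simp add: hd_conv_nth)
    then show ?thesis using ne h by (simp add: hd_conv_nth lift_nth col_0)
  qed
  moreover have "last (lift m xs i j) = (b,j)"
  proof -
    have "lift m xs i j \<noteq> []" using ne by (simp add: lift_def)
    then have "last (lift m xs i j) = lift m xs i j ! ?k" by (simp add: last_conv_nth)
    then show ?thesis using ne la k by (simp add: last_conv_nth lift_nth col_last)
  qed
  moreover have "distinct (lift m xs i j)"
    using d by (auto simp: distinct_conv_nth lift_nth)
  moreover have "set (lift m xs i j) \<subseteq> mult_edges m E"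
    using s ij by (auto simp: lift_def mult_edges_def col_lt)
  moreover have "\<forall>l. Suc l < length (lift m xs i j) \<longrightarrow> line_adj (mult_edges m E) (mult_ends ends) (lift m xs i j ! l) (lift m xs i j ! Suc l)"
    using adj ij by (auto simp: lift_nth line_adj_def mult_edges_def mult_ends_def col_lt)
  ultimately show ?thesis by (simp add: is_path_def)
qed


lemma divmod_eq: "(a::nat) div m = b div m \<Longrightarrow> a mod m = b mod m \<Longrightarrow> a = b"
  by (metis div_mult_mod_eq)

lemma pair2: "x \<noteq> y \<Longrightarrow> {(x,a),(y,b)} = {(x,c),(y,d)} \<Longrightarrow> a=c \<and> b=d"
  by (auto simp: doubleton_eq_iff)

lemma idx2: "{xs!l1, xs!Suc l1} = {xs!l2, xs!Suc l2} \<Longrightarrow> distinct xs \<Longrightarrow> Suc l1 < length xs \<Longrightarrow> Suc l2 < length xs \<Longrightarrow> l1 = l2"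
proof -
  assume a: "{xs!l1, xs!Suc l1} = {xs!l2, xs!Suc l2}" "distinct xs" "Suc l1 < length xs" "Suc l2 < length xs"
  then consider "xs!l1 = xs!l2" | "xs!l1 = xs!Suc l2" "xs!Suc l1 = xs!l2" by (auto simp: doubleton_eq_iff)
  then show "l1 = l2"
  proof cases
    case 1 then show ?thesis using a by (simp add: nth_eq_iff_index_eq)
  next
    case 2 then have "l1 = Suc l2" "Suc l1 = l2" using a by (simp_all add: nth_eq_iff_index_eq)
    then show ?thesis by simp
  qed
qed

theorem theorem1p2:
  fixes V :: "'v set" and E :: "'e set" and ends :: "'e \<Rightarrow> 'v set" and t m :: nat
  assumes "multigraph V E ends"
    and "has_K_immersion E (line_adj E ends) t"
    and "m \<ge> 2"
  shows "has_K_immersion (mult_edges m E) (line_adj (mult_edges m E) (mult_ends ends)) (m * t)"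
proof -
  obtain \<phi> P where \<phi>inj: "inj_on \<phi> {..<t}" and \<phi>E: "\<phi> ` {..<t} \<subseteq> E"
    and Pp: "\<And>u v. u < v \<Longrightarrow> v < t \<Longrightarrow> is_path E (line_adj E ends) (P u v) (\<phi> u) (\<phi> v)"
    and Pd: "\<And>u v u' v'. u < v \<Longrightarrow> v < t \<Longrightarrow> u' < v' \<Longrightarrow> v' < t \<Longrightarrow> (u, v) \<noteq> (u', v') \<Longrightarrow>
            path_edges (P u v) \<inter> path_edges (P u' v') = {}"
    using assms(2) unfolding has_K_immersion_def by metis
  have m0: "m > 0" using assms(3) by simp
  have endsne: "\<And>e. e \<in> E \<Longrightarrow> ends e \<noteq> {}"
    using assms(1) unfolding multigraph_def by (metis card.empty zero_neq_numeral)
  define \<psi> where "\<psi> w = (\<phi> (w div m), w mod m)" for w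
  define Q where "Q w w' = (if w div m = w' div m then [\<psi> w, \<psi> w']
     else lift m (P (w div m) (w' div m)) (w mod m) (w' mod m))" for w w'
  have divlt: "\<And>w. w < m * t \<Longrightarrow> w div m < t"
    by (simp add: less_mult_imp_div_less mult.commute)
  have \<psi>inj: "inj_on \<psi> {..<m*t}"
  proof
    fix w w' assume w: "w \<in> {..<m*t}" "w' \<in> {..<m*t}" "\<psi> w = \<psi> w'"
    then have "\<phi> (w div m) = \<phi> (w' div m)" "w mod m = w' mod m" by (auto simp: \<psi>_def)
    then have "w div m = w' div m" "w mod m = w' mod m" using \<phi>inj divlt w(1,2)
      by (auto dest: inj_onD)
    then show "w = w'" by (metis div_mult_mod_eq)
  qed
  have \<psi>E: "\<psi> ` {..<m*t} \<subseteq> mult_edges m E"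
    using \<phi>E divlt m0 by (auto simp: \<psi>_def mult_edges_def)
  have paths: "is_path (mult_edges m E) (line_adj (mult_edges m E) (mult_ends ends)) (Q w w') (\<psi> w) (\<psi> w')"
    if ww: "w < w'" "w' < m * t" for w w'
  proof (cases "w div m = w' div m")
    case True
    have Q: "Q w w' = [\<psi> w, \<psi> w']" using True by (simp add: Q_def)
    have ne: "\<psi> w \<noteq> \<psi> w'" using \<psi>inj ww by (auto dest: inj_onD)
    have in1: "\<psi> w \<in> mult_edges m E" "\<psi> w' \<in> mult_edges m E" using \<psi>E ww by auto
    have "mult_ends ends (\<psi> w) \<inter> mult_ends ends (\<psi> w') \<noteq> {}"
      using True endsne \<phi>E divlt ww by (auto simp: mult_ends_def \<psi>_def)
    then have "line_adj (mult_edges m E) (mult_ends ends) (\<psi> w) (\<psi> w')"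
      using ne in1 by (simp add: line_adj_def)
    then show ?thesis using Q ne in1 by (auto simp: is_path_def less_Suc_eq)
  next
    case False
    have lt: "w div m < w' div m" using False ww div_le_mono[of w w' m] by simp
    have Q: "Q w w' = lift m (P (w div m) (w' div m)) (w mod m) (w' mod m)" using False by (simp add: Q_def)
    have "\<phi> (w div m) \<noteq> \<phi> (w' div m)" using False \<phi>inj divlt ww by (auto dest: inj_onD)
    then show ?thesis unfolding Q \<psi>_def
      by (intro lift_path Pp lt divlt ww) (simp_all add: m0)
  qed
  have disj: "path_edges (Q w1 w1') \<inter> path_edges (Q w2 w2') = {}"
    if w: "w1 < w1'" "w1' < m*t" "w2 < w2'" "w2' < m*t" "(w1, w1') \<noteq> (w2, w2')" for w1 w1' w2 w2'
  proof (rule ccontr)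
    assume "path_edges (Q w1 w1') \<inter> path_edges (Q w2 w2') \<noteq> {}"
    then obtain e where e1: "e \<in> path_edges (Q w1 w1')" and e2: "e \<in> path_edges (Q w2 w2')" by blast
    have same: "e = {\<psi> w, \<psi> w'} \<and> fst ` e = {\<phi> (w div m)}"
      if "e \<in> path_edges (Q w w')" "w div m = w' div m" for w w'
      using that by (simp add: Q_def \<psi>_def)
    have cross: "\<exists>l. Suc l < length (P (w div m) (w' div m)) \<and>
        e = {(P (w div m) (w' div m) ! l, col m (length (P (w div m) (w' div m)) - 1) (w mod m) (w' mod m) l),
             (P (w div m) (w' div m) ! Suc l, col m (length (P (w div m) (w' div m)) - 1) (w mod m) (w' mod m) (Suc l))} \<and>
        fst ` e = {P (w div m) (w' div m) ! l, P (w div m) (w' div m) ! Suc l} \<and>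
        fst ` e \<in> path_edges (P (w div m) (w' div m)) \<and>
        P (w div m) (w' div m) ! l \<noteq> P (w div m) (w' div m) ! Suc l \<and>
        w div m < w' div m"
      if "e \<in> path_edges (Q w w')" "w div m \<noteq> w' div m" "w < w'" "w' < m*t" for w w'
    proof -
      have lt: "w div m < w' div m" using that div_le_mono[of w w' m] by simp
      have d: "distinct (P (w div m) (w' div m))" using Pp[OF lt divlt[OF that(4)]] by (simp add: is_path_def)
      have "e \<in> path_edges (lift m (P (w div m) (w' div m)) (w mod m) (w' mod m))"
        using that by (simp add: Q_def)
      then obtain l where l: "Suc l < length (P (w div m) (w' div m))" and
        el: "e = {(P (w div m) (w' div m) ! l, col m (length (P (w div m) (w' div m)) - 1) (w mod m) (w' mod m) l),
             (P (w div m) (w' div m) ! Suc l, col m (length (P (w div m) (w' div m)) - 1) (w mod m) (w' mod m) (Suc l))}"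
        unfolding lift_edges by blast
      have "P (w div m) (w' div m) ! l \<noteq> P (w div m) (w' div m) ! Suc l"
        using d l by (simp add: nth_eq_iff_index_eq)
      moreover have "fst ` e = {P (w div m) (w' div m) ! l, P (w div m) (w' div m) ! Suc l}" using el by simp
      moreover have "{P (w div m) (w' div m) ! l, P (w div m) (w' div m) ! Suc l} \<in> path_edges (P (w div m) (w' div m))"
        using l unfolding path_edges_nth by blast
      ultimately show ?thesis using l el lt by auto
    qed
    show False
    proof (cases "w1 div m = w1' div m")
      case T1: True
      show False
      proof (cases "w2 div m = w2' div m")
        case T2: True
        have "\<psi> ` {w1, w1'} = \<psi> ` {w2, w2'}" using same[OF e1 T1] same[OF e2 T2] by simp
        then have "{w1, w1'} = {w2, w2'}" using \<psi>inj w
          by (subst (asm) inj_on_image_eq_iff[of \<psi> "{..<m*t}"]) auto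
        then show False using w by (auto simp: doubleton_eq_iff)
      next
        case F2: False
        show False using same[OF e1 T1] cross[OF e2 F2 w(3,4)] by (auto simp: doubleton_eq_iff)
      qed
    next
      case F1: False
      show False
      proof (cases "w2 div m = w2' div m")
        case T2: True
        show False using same[OF e2 T2] cross[OF e1 F1 w(1,2)] by (auto simp: doubleton_eq_iff)
      next
        case F2: False
        obtain l1 where l1: "Suc l1 < length (P (w1 div m) (w1' div m)) \<and>
        e = {(P (w1 div m) (w1' div m) ! l1, col m (length (P (w1 div m) (w1' div m)) - 1) (w1 mod m) (w1' mod m) l1),
             (P (w1 div m) (w1' div m) ! Suc l1, col m (length (P (w1 div m) (w1' div m)) - 1) (w1 mod m) (w1' mod m) (Suc l1))} \<and>
        fst ` e = {P (w1 div m) (w1' div m) ! l1, P (w1 div m) (w1' div m) ! Suc l1} \<and>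
        fst ` e \<in> path_edges (P (w1 div m) (w1' div m)) \<and>
        P (w1 div m) (w1' div m) ! l1 \<noteq> P (w1 div m) (w1' div m) ! Suc l1 \<and>
        w1 div m < w1' div m" using cross[OF e1 F1 w(1,2)] by blast
        obtain l2 where l2: "Suc l2 < length (P (w2 div m) (w2' div m)) \<and>
        e = {(P (w2 div m) (w2' div m) ! l2, col m (length (P (w2 div m) (w2' div m)) - 1) (w2 mod m) (w2' mod m) l2),
             (P (w2 div m) (w2' div m) ! Suc l2, col m (length (P (w2 div m) (w2' div m)) - 1) (w2 mod m) (w2' mod m) (Suc l2))} \<and>
        fst ` e = {P (w2 div m) (w2' div m) ! l2, P (w2 div m) (w2' div m) ! Suc l2} \<and>
        fst ` e \<in> path_edges (P (w2 div m) (w2' div m)) \<and>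
        P (w2 div m) (w2' div m) ! l2 \<noteq> P (w2 div m) (w2' div m) ! Suc l2 \<and>
        w2 div m < w2' div m" using cross[OF e2 F2 w(3,4)] by blast
        have uv: "(w1 div m, w1' div m) = (w2 div m, w2' div m)"
        proof (rule ccontr)
          assume "(w1 div m, w1' div m) \<noteq> (w2 div m, w2' div m)"
          from Pd[OF _ divlt[OF w(2)] _ divlt[OF w(4)] this] l1 l2 show False by blast
        qed
        define xs where "xs = P (w1 div m) (w1' div m)"
        have xs2: "xs = P (w2 div m) (w2' div m)" using uv by (simp add: xs_def)
        have d: "distinct xs" using Pp[OF _ divlt[OF w(2)], of "w1 div m"] l1 by (simp add: is_path_def xs_def)
        have f1: "fst ` e = {xs!l1, xs!Suc l1}" and L1: "Suc l1 < length xs" and ne: "xs!l1 \<noteq> xs!Suc l1"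
          and E1: "e = {(xs ! l1, col m (length xs - 1) (w1 mod m) (w1' mod m) l1),
             (xs ! Suc l1, col m (length xs - 1) (w1 mod m) (w1' mod m) (Suc l1))}"
          using l1 unfolding xs_def by blast+
        have f2: "fst ` e = {xs!l2, xs!Suc l2}" and L2: "Suc l2 < length xs"
          and E2: "e = {(xs ! l2, col m (length xs - 1) (w2 mod m) (w2' mod m) l2),
             (xs ! Suc l2, col m (length xs - 1) (w2 mod m) (w2' mod m) (Suc l2))}"
          using l2 unfolding xs2 by blast+
        have "{xs!l1, xs!Suc l1} = {xs!l2, xs!Suc l2}" using f1 f2 by simp
        then have "l1 = l2" using d L1 L2 by (rule idx2)
        then have "{(xs ! l1, col m (length xs - 1) (w1 mod m) (w1' mod m) l1),
             (xs ! Suc l1, col m (length xs - 1) (w1 mod m) (w1' mod m) (Suc l1))} =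
             {(xs ! l1, col m (length xs - 1) (w2 mod m) (w2' mod m) l1),
             (xs ! Suc l1, col m (length xs - 1) (w2 mod m) (w2' mod m) (Suc l1))}"
          using trans[OF E1[symmetric] E2] \<open>l1 = l2\<close> by simp
        then have "col m (length xs - 1) (w1 mod m) (w1' mod m) l1 = col m (length xs - 1) (w2 mod m) (w2' mod m) l1 \<and>
           col m (length xs - 1) (w1 mod m) (w1' mod m) (Suc l1) = col m (length xs - 1) (w2 mod m) (w2' mod m) (Suc l1)"
          by (rule pair2[OF ne])
        note C = this
        have SL: "Suc l1 \<le> length xs - 1" using L1 by simp
        have "w1 mod m = w2 mod m \<and> w1' mod m = w2' mod m"
          by (rule col_inj[OF mod_less_divisor[OF m0] mod_less_divisor[OF m0] mod_less_divisor[OF m0]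
             mod_less_divisor[OF m0] SL conjunct1[OF C] conjunct2[OF C]])
        note M = this
        have D: "w1 div m = w2 div m" "w1' div m = w2' div m" using uv by simp_all
        have W1: "w1 = w2" using divmod_eq[OF D(1) conjunct1[OF M]] .
        have W2: "w1' = w2'" using divmod_eq[OF D(2) conjunct2[OF M]] .
        show False using w(5) W1 W2 by blast
      qed
    qed
  qed
  show ?thesis unfolding has_K_immersion_def
  proof (intro exI[of _ \<psi>] exI[of _ Q] conjI allI impI)
    show "inj_on \<psi> {..<m * t}" by (fact \<psi>inj)
    show "\<psi> ` {..<m * t} \<subseteq> mult_edges m E" by (fact \<psi>E)
  next
    fix u v assume "u < v \<and> v < m * t"
    then show "is_path (mult_edges m E) (line_adj (mult_edges m E) (mult_ends ends)) (Q u v) (\<psi> u) (\<psi> v)"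
      using paths by blast
  next
    fix u v u' v' assume "u < v \<and> v < m * t \<and> u' < v' \<and> v' < m * t \<and> (u, v) \<noteq> (u', v')"
    then show "path_edges (Q u v) \<inter> path_edges (Q u' v') = {}" using disj by blast
  qed
qed

end
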